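(* Let $d\neq 1$ be a squarefree integer, let $K=\mathbb{Q}(\sqrt{d})$ with ring of integers $\mathcal{O}_K$, and let $D$ denote the discriminant of $K$. Assume that $K$ has class number $1$. Then for an arbitrary nonzero rational number $r$ the following statements are equivalent: (i) there exists a unit $\epsilon\in\mathcal{O}_K$ such that $\epsilon r\in K^2$; (ii) for each rational prime $p$, if $v_p(r)$ is odd then $p\mid D$; (iii) there exists a divisor $d'$ of $D$ in $\mathbb{Z}$ such that $d' r\in\mathbb{Q}^2$.
   Context: For a rational prime $p$, $v_p$ denotes the $p$-adic valuation on $\mathbb{Q}$. $K^2$ and $\mathbb{Q}^2$ denote the sets of squares in $K$ and $\mathbb{Q}$. *)

theory Defs
  imports "HOL-Computational_Algebra.Computational_Algebra"
begin

definition quad_field :: "int \<Rightarrow> complex set" where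
  "quad_field d = {of_rat a + of_rat b * csqrt (of_int d) | a b. True}"

definition quad_ints :: "int \<Rightarrow> complex set" where
  "quad_ints d = {x \<in> quad_field d. algebraic_int x}"

definition quad_unit :: "int \<Rightarrow> complex \<Rightarrow> bool" where
  "quad_unit d e \<longleftrightarrow> e \<in> quad_ints d \<and> (\<exists>u \<in> quad_ints d. e * u = 1)"

definition quad_ideal :: "int \<Rightarrow> complex set \<Rightarrow> bool" where
  "quad_ideal d I \<longleftrightarrow> I \<subseteq> quad_ints d \<and> 0 \<in> I \<and>
     (\<forall>x\<in>I. \<forall>y\<in>I. x + y \<in> I) \<and> (\<forall>x\<in>I. \<forall>a\<in>quad_ints d. a * x \<in> I)"

definition class_number_one :: "int \<Rightarrow> bool" where
  "class_number_one d \<longleftrightarrow>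
     (\<forall>I. quad_ideal d I \<longrightarrow> (\<exists>a\<in>quad_ints d. I = {a * x | x. x \<in> quad_ints d}))"

definition quad_disc :: "int \<Rightarrow> int" where
  "quad_disc d = (if d mod 4 = 1 then d else 4 * d)"

text \<open>p-adic valuation on Q (value for r = 0 irrelevant).\<close>
definition padic_val_rat :: "int \<Rightarrow> rat \<Rightarrow> int" where
  "padic_val_rat p r = (case quotient_of r of (a, b) \<Rightarrow>
      int (multiplicity p a) - int (multiplicity p b))"

end

theory Submission
  imports Defs "Berlekamp_Zassenhaus.Factor_Bound"
begin


interpretation rqh: map_poly_comm_ring_hom "of_rat :: rat \<Rightarrow> complex" ..

lemma csqrt_sq: "csqrt z * csqrt z = z"
  using power2_csqrt[of z] by (simp add: power2_eq_square)

lemma rat_sq_int_sqfree: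
  fixes d k :: int and q :: rat
  assumes "squarefree d" and "of_int d * q^2 = of_int k"
  shows "q \<in> \<int>"
proof -
  obtain u v where uv: "quotient_of q = (u,v)" by (cases "quotient_of q") auto
  have v0: "v > 0" using quotient_of_denom_pos[OF uv] .
  have q: "q = of_int u / of_int v" using quotient_of_div[OF uv] .
  note cop = quotient_of_coprime[OF uv]
  have "of_int d * (of_int u)^2 = of_int k * (of_int v :: rat)^2"
    using assms(2) v0 unfolding q by (simp add: field_simps power2_eq_square)
  hence eq: "d * u^2 = k * v^2" by (metis of_int_eq_iff of_int_mult of_int_power)
  hence "v^2 dvd d * u^2" by simp
  moreover have "algebraic_semidom_class.coprime (v^2) (u^2)" using cop by (simp add: ac_simps)
  ultimately have "v^2 dvd d" using coprime_dvd_mult_left_iff by blast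
  hence "v dvd 1" using assms(1) squarefreeD by blast
  hence "v = 1" using v0 by auto
  thus ?thesis using q by simp
qed

lemma rat_sq_not_sqfree:
  fixes d :: int and q :: rat
  assumes "squarefree d" "d \<noteq> 1" shows "q^2 \<noteq> of_int d"
proof
  assume h: "q^2 = of_int d"
  have "of_int d * q^2 = of_int (d*d)" using h by simp
  hence "q \<in> \<int>" using rat_sq_int_sqfree[OF assms(1)] by blast
  then obtain u where u: "q = of_int u" by (auto elim: Ints_cases)
  hence "d = u^2" using h by (metis of_int_eq_iff of_int_power)
  hence "squarefree (u^2)" using assms by simp
  hence "is_unit u" by (simp add: squarefree_power_iff)
  hence "\<bar>u\<bar> = 1" by (simp add: zdvd1_eq)
  hence "u^2 = 1" by (metis power2_abs power_one)
  thus False using \<open>d = u^2\<close> assms(2) by simp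
qed

lemma coord_zero:
  assumes "squarefree d" "d \<noteq> 1" and "of_rat a + of_rat b * csqrt (of_int d) = 0"
  shows "a = 0 \<and> b = 0"
proof -
  have "b = 0"
  proof (rule ccontr)
    assume b: "b \<noteq> 0"
    have "csqrt (of_int d) = - of_rat a / of_rat b" using assms(3) b
      by (simp add: field_simps) (metis add.commute add_eq_0_iff)
    hence "csqrt (of_int d) = of_rat (-a/b)" by (simp add: of_rat_divide of_rat_minus)
    hence "of_int d = (of_rat (-a/b) :: complex)^2" using power2_csqrt by metis
    hence "(of_rat ((-a/b)^2) :: complex) = of_rat (of_int d)" by (metis of_rat_power of_rat_of_int_eq)
    hence "(-a/b)^2 = of_int d" using of_rat_eq_iff by blast
    thus False using rat_sq_not_sqfree assms(1,2) by blast
  qed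
  thus ?thesis using assms(3) by simp
qed

lemma coord_zero_int:
  assumes "squarefree d" "d \<noteq> 1" and "of_int X + of_int Y * csqrt (of_int d) = 0"
  shows "X = 0 \<and> Y = 0"
  using coord_zero[OF assms(1,2), of "of_int X" "of_int Y"] assms(3) by simp

definition qe :: "int \<Rightarrow> int \<Rightarrow> int \<Rightarrow> complex" where
  "qe d A B = (of_int A + of_int B * csqrt (of_int d)) / 2"

lemma qe_inj:
  assumes "squarefree d" "d \<noteq> 1" "qe d A B = qe d A' B'"
  shows "A = A' \<and> B = B'"
proof -
  have "of_int (A - A') + of_int (B - B') * csqrt (of_int d) = 0"
    using assms(3) unfolding qe_def by (simp add: algebra_simps)
  thus ?thesis using coord_zero_int[OF assms(1,2)] by fastforce
qed

lemma qe_in_field: "qe d A B \<in> quad_field d"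
  unfolding quad_field_def qe_def
  by (rule CollectI, rule exI[of _ "of_int A / 2"], rule exI[of _ "of_int B / 2"])
     (simp add: of_rat_divide field_simps)

lemma qe_intro:
  assumes "4 dvd A^2 - d*B^2"
  shows "qe d A B \<in> quad_ints d"
proof -
  obtain c where c: "A^2 - d*B^2 = 4*c" using assms by blast
  let ?x = "qe d A B"
  have "poly (of_int_poly [:c, -A, 1:]) ?x = 0"
  proof -
    have "poly (of_int_poly [:c, -A, 1:]) ?x = of_int c - of_int A * ?x + ?x * ?x"
      by (simp add: algebra_simps)
    also have "\<dots> = (4 * of_int c - (of_int A^2 - of_int d * of_int B^2)) / 4"
      unfolding qe_def by (simp add: field_simps power2_eq_square csqrt_sq)
    also have "(of_int A^2 - of_int d * of_int B^2 :: complex) = of_int (4*c)"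
      using c[symmetric] by simp
    finally show ?thesis by simp
  qed
  hence "algebraic_int ?x"
    unfolding algebraic_int_altdef_ipoly by (intro exI[of _ "[:c, -A, 1:]"]) simp
  thus ?thesis unfolding quad_ints_def using qe_in_field by blast
qed



lemma deg1_poly: "degree (R::'a::zero poly) \<le> 1 \<Longrightarrow> R = [:Polynomial.coeff R 0, Polynomial.coeff R 1:]"
  by (rule poly_eqI) (auto simp: coeff_pCons coeff_eq_0 split: nat.split)

lemma trace_norm_int:
  assumes sf: "squarefree d" and d1: "d \<noteq> 1"
    and ai: "algebraic_int (of_rat \<alpha> + of_rat \<beta> * csqrt (of_int d) :: complex)"
  shows "2*\<alpha> \<in> \<int> \<and> \<alpha>^2 - of_int d * \<beta>^2 \<in> \<int>"
proof (cases "\<beta> = 0")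
  case True
  let ?x = "of_rat \<alpha> + of_rat \<beta> * csqrt (of_int d) :: complex"
  have "?x \<in> \<rat>" using True by simp
  hence "?x \<in> \<int>" using rational_algebraic_int_is_int ai by blast
  then obtain n where "?x = of_int n" by (auto elim: Ints_cases)
  hence "(of_rat \<alpha> :: complex) = of_rat (of_int n)" using True by simp
  hence "\<alpha> = of_int n" using of_rat_eq_iff by blast
  thus ?thesis using True by simp
next
  case False
  let ?s = "csqrt (of_int d) :: complex"
  let ?x = "of_rat \<alpha> + of_rat \<beta> * ?s"
  from ai obtain P :: "int poly" where P0: "poly (of_int_poly P) ?x = 0" and P1: "lead_coeff P = 1"
    using algebraic_int_altdef_ipoly by blast
  define g :: "rat poly" where "g = [:\<alpha>^2 - of_int d * \<beta>^2, -2*\<alpha>, 1:]"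
  define Pr :: "rat poly" where "Pr = of_int_poly P"
  have g0: "g \<noteq> 0" and dg: "degree g = 2" unfolding g_def by auto
  define R where "R = Pr mod g"
  define H where "H = Pr div g"
  have PgR: "Pr = g * H + R" by (simp add: R_def H_def)
  have degR: "degree R \<le> 1" using degree_mod_less[OF g0, of Pr] dg unfolding R_def by auto
  have mapP: "map_poly of_rat Pr = (of_int_poly P :: complex poly)"
    unfolding Pr_def by (subst map_poly_map_poly) (auto simp: o_def)
  have pg: "poly (map_poly of_rat g) ?x = 0"
    unfolding g_def by (simp add: of_rat_add of_rat_mult of_rat_diff of_rat_power of_rat_minus
        algebra_simps power2_eq_square csqrt_sq)
  have "poly (map_poly of_rat Pr) ?x = poly (map_poly of_rat g) ?x * poly (map_poly of_rat H) ?x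
      + poly (map_poly of_rat R) ?x"
    by (subst PgR) (simp add: rqh.hom_mult rqh.hom_add)
  hence pR: "poly (map_poly of_rat R) ?x = 0" using pg P0 mapP by simp
  have "R = 0"
  proof -
    have Re: "R = [:Polynomial.coeff R 0, Polynomial.coeff R 1:]" using deg1_poly degR by blast
    have "poly (map_poly of_rat R) ?x = of_rat (Polynomial.coeff R 0) + of_rat (Polynomial.coeff R 1) * ?x"
      by (subst Re) (simp add: Polynomial.map_poly_pCons algebra_simps)
    hence "of_rat (Polynomial.coeff R 0 + Polynomial.coeff R 1 * \<alpha>) + of_rat (Polynomial.coeff R 1 * \<beta>) * ?s = 0"
      using pR by (simp add: of_rat_add of_rat_mult algebra_simps)
    from coord_zero[OF sf d1 this] False have "Polynomial.coeff R 1 = 0" "Polynomial.coeff R 0 = 0" by auto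
    thus ?thesis using Re by simp
  qed
  hence Pgh: "of_int_poly P = g * H" using PgR unfolding Pr_def by simp
  obtain r rg where rrg: "rat_to_normalized_int_poly g = (r, rg)" by (cases "rat_to_normalized_int_poly g") auto
  from rat_to_int_factor_explicit[OF Pgh rrg] obtain r' where P: "P = rg * Polynomial.smult (content P) r'" by blast
  note nz = rat_to_normalized_int_poly[OF rrg]
  have gr: "g = Polynomial.smult r (of_int_poly rg)" and r0: "r > 0" and drg: "degree rg = 2" using nz dg by auto
  have "lead_coeff P = lead_coeff rg * lead_coeff (Polynomial.smult (content P) r')"
    by (metis P lead_coeff_mult)
  hence "Polynomial.coeff rg 2 * lead_coeff (Polynomial.smult (content P) r') = 1" using P1 drg by simp
  hence u: "Polynomial.coeff rg 2 = 1 \<or> Polynomial.coeff rg 2 = -1" using zmult_eq_1_iff by blast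
  have "1 = Polynomial.coeff g 2" unfolding g_def by (simp add: numeral_2_eq_2)
  also have "\<dots> = r * of_int (Polynomial.coeff rg 2)" using gr by simp
  finally have r1: "r * of_int (Polynomial.coeff rg 2) = 1" ..
  with u r0 have "Polynomial.coeff rg 2 = 1" by auto
  with r1 have "r = 1" by simp
  hence "g = of_int_poly rg" using gr by simp
  hence "Polynomial.coeff g 1 = of_int (Polynomial.coeff rg 1)" "Polynomial.coeff g 0 = of_int (Polynomial.coeff rg 0)" by simp_all
  hence "-2*\<alpha> = of_int (Polynomial.coeff rg 1)" "\<alpha>^2 - of_int d * \<beta>^2 = of_int (Polynomial.coeff rg 0)"
    unfolding g_def by simp_all
  hence "2*\<alpha> = of_int (- Polynomial.coeff rg 1)" by simp
  thus ?thesis using \<open>\<alpha>^2 - of_int d * \<beta>^2 = of_int (Polynomial.coeff rg 0)\<close> by (metis Ints_of_int)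
qed

lemma qi_struct:
  assumes sf: "squarefree d" and d1: "d \<noteq> 1" and x: "x \<in> quad_ints d"
  shows "\<exists>A B. x = qe d A B \<and> 4 dvd A^2 - d*B^2"
proof -
  from x obtain \<alpha> \<beta> where xe: "x = of_rat \<alpha> + of_rat \<beta> * csqrt (of_int d)" and ai: "algebraic_int x"
    unfolding quad_ints_def quad_field_def by auto
  have tn: "2*\<alpha> \<in> \<int> \<and> \<alpha>^2 - of_int d * \<beta>^2 \<in> \<int>" using trace_norm_int[OF sf d1] ai xe by blast
  then obtain T where T: "2*\<alpha> = of_int T" by (auto elim!: Ints_cases)
  from tn obtain N where N: "\<alpha>^2 - of_int d*\<beta>^2 = of_int N" by (auto elim!: Ints_cases)
  have "of_int d * (2*\<beta>)^2 = 4*(\<alpha>^2) - 4*(\<alpha>^2 - of_int d * \<beta>^2)" by (simp add: algebra_simps power2_eq_square)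
  also have "4*(\<alpha>^2) = (2*\<alpha>)^2" by (simp add: power2_eq_square)
  finally have "of_int d * (2*\<beta>)^2 = of_int (T^2 - 4*N)" using T N by simp
  hence "2*\<beta> \<in> \<int>" using rat_sq_int_sqfree sf by blast
  then obtain B where B: "2*\<beta> = of_int B" by (auto elim: Ints_cases)
  have ab: "\<alpha> = of_int T / 2" "\<beta> = of_int B / 2" using T B by auto
  have "x = qe d T B" unfolding xe qe_def ab by (simp add: of_rat_divide field_simps)
  moreover have "rat_of_int (T^2 - d*B^2) = of_int (4*N)"
    using N unfolding ab by (simp add: field_simps power2_eq_square)
  hence "T^2 - d*B^2 = 4*N" using of_int_eq_iff by blast
  ultimately show ?thesis by (metis dvd_triv_left)
qed



lemma mod4_cases: "(x::int) mod 4 = 0 \<or> x mod 4 = 1 \<or> x mod 4 = 2 \<or> x mod 4 = 3" by presburger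
lemma even_mod4: "even (x::int) \<longleftrightarrow> even (x mod 4)" by presburger

lemma sqfree_mod4: "squarefree (d::int) \<Longrightarrow> d mod 4 \<noteq> 0"
proof
  assume "squarefree d" "d mod 4 = 0"
  hence "(4::int) dvd d" by presburger
  hence "2^2 dvd d" by simp
  with \<open>squarefree d\<close> have "(2::int) dvd 1" using squarefreeD by blast
  thus False by simp
qed

lemma sq_even: "even (x::int) \<Longrightarrow> \<exists>k. x^2 = 4*k"
  by (auto elim!: evenE simp: power2_eq_square)
lemma sq_odd: "odd (x::int) \<Longrightarrow> \<exists>k. x^2 = 4*k+1"
proof -
  assume "odd x" then obtain k where "x = 2*k+1" by (auto elim: oddE)
  hence "x^2 = 4*(k*k+k)+1" by (simp add: power2_eq_square algebra_simps)
  thus ?thesis by blast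
qed
lemma dvd4_aux: "(4::int) dvd 4*X + c \<Longrightarrow> 4 dvd c" by presburger
lemma parity0:
  assumes d0: "(d::int) mod 4 \<noteq> 0" and h: "4 dvd A^2 - d*B^2"
  shows "(even A \<longleftrightarrow> even B) \<and> (d mod 4 \<noteq> 1 \<longrightarrow> even A \<and> even B)"
proof (cases "even A"; cases "even B")
  assume a: "even A" and b: "even B"
  thus ?thesis by simp
next
  assume a: "even A" and b: "odd B"
  obtain m1 where m1: "A^2 = 4*m1" using sq_even[OF a] by blast
  obtain k where k: "B^2 = 4*k+1" using sq_odd[OF b] by blast
  have "A^2 - d*B^2 = 4*(m1 - d*k) + (- d)" using m1 k by (simp add: algebra_simps)
  with h have "4 dvd (-d)" using dvd4_aux by metis
  hence "4 dvd d" by simp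
  with d0 show ?thesis by presburger
next
  assume a: "odd A" and b: "even B"
  obtain m1 where m1: "A^2 = 4*m1+1" using sq_odd[OF a] by blast
  obtain k where k: "B^2 = 4*k" using sq_even[OF b] by blast
  have "A^2 - d*B^2 = 4*(m1 - d*k) + 1" using m1 k by (simp add: algebra_simps)
  with h have "(4::int) dvd 1" using dvd4_aux by metis
  thus ?thesis by simp
next
  assume a: "odd A" and b: "odd B"
  obtain m1 where m1: "A^2 = 4*m1+1" using sq_odd[OF a] by blast
  obtain k where k: "B^2 = 4*k+1" using sq_odd[OF b] by blast
  have "A^2 - d*B^2 = 4*(m1 - d*k) + (1 - d)" using m1 k by (simp add: algebra_simps)
  with h have "4 dvd (1 - d)" using dvd4_aux by metis
  hence "d mod 4 = 1" by presburger
  thus ?thesis using a b by simp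
qed
lemma parity:
  assumes "squarefree (d::int)" "4 dvd A^2 - d*B^2"
  shows "(even A \<longleftrightarrow> even B) \<and> (d mod 4 \<noteq> 1 \<longrightarrow> even A \<and> even B)"
  using parity0[OF sqfree_mod4[OF assms(1)] assms(2)] .

lemma qe_add: "qe d A B + qe d A' B' = qe d (A+A') (B+B')"
  unfolding qe_def by (simp add: field_simps)

lemma qe_neg: "- qe d A B = qe d (-A) (-B)"
  unfolding qe_def by (simp add: field_simps)

lemma qe_mult:
  assumes "2*C = A*A' + d*B*B'" "2*D = A*B' + A'*B"
  shows "qe d A B * qe d A' B' = qe d C D"
proof -
  let ?s = "csqrt (of_int d) :: complex"
  have c: "2 * (of_int C :: complex) = of_int A * of_int A' + of_int d * of_int B * of_int B'"
    using arg_cong[OF assms(1), of "of_int :: int \<Rightarrow> complex"] by simp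
  have dd: "2 * (of_int D :: complex) = of_int A * of_int B' + of_int A' * of_int B"
    using arg_cong[OF assms(2), of "of_int :: int \<Rightarrow> complex"] by simp
  have "qe d A B * qe d A' B' = (of_int A * of_int A' + of_int B * of_int B' * (?s * ?s)
         + (of_int A * of_int B' + of_int A' * of_int B) * ?s) / 4"
    unfolding qe_def by (simp add: field_simps)
  also have "\<dots> = (2 * of_int C + 2 * of_int D * ?s) / 4"
    unfolding csqrt_sq c dd by (simp add: algebra_simps)
  also have "\<dots> = qe d C D" unfolding qe_def by (simp add: field_simps)
  finally show ?thesis .
qed

context
  fixes d :: int
  assumes sf: "squarefree d" and d1: "d \<noteq> 1"
begin

lemma O_add: "x \<in> quad_ints d \<Longrightarrow> y \<in> quad_ints d \<Longrightarrow> x + y \<in> quad_ints d"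
proof -
  assume x: "x \<in> quad_ints d" and y: "y \<in> quad_ints d"
  obtain A B where xe: "x = qe d A B" and hx: "4 dvd A^2 - d*B^2" using qi_struct[OF sf d1 x] by blast
  obtain A' B' where ye: "y = qe d A' B'" and hy: "4 dvd A'^2 - d*B'^2" using qi_struct[OF sf d1 y] by blast
  have p1: "(even A \<longleftrightarrow> even B) \<and> (d mod 4 \<noteq> 1 \<longrightarrow> even A \<and> even B)" using parity[OF sf hx] .
  have p2: "(even A' \<longleftrightarrow> even B') \<and> (d mod 4 \<noteq> 1 \<longrightarrow> even A' \<and> even B')" using parity[OF sf hy] .
  have "even (A*A' - d*B*B')"
  proof (cases "d mod 4 = 1")
    case True
    hence "odd d" by presburger
    thus ?thesis using p1 p2 by (cases "even A"; cases "even A'") auto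
  next
    case False thus ?thesis using p1 p2 by simp
  qed
  then obtain k where k: "A*A' - d*B*B' = 2*k" by blast
  have "(A+A')^2 - d*(B+B')^2 = (A^2 - d*B^2) + (A'^2 - d*B'^2) + 4*k"
    using k by (simp add: algebra_simps power2_eq_square)
  hence "4 dvd (A+A')^2 - d*(B+B')^2" using hx hy by simp
  moreover have "x + y = qe d (A+A') (B+B')" by (simp add: xe ye qe_add)
  ultimately show ?thesis using qe_intro by simp
qed

lemma O_mult: "x \<in> quad_ints d \<Longrightarrow> y \<in> quad_ints d \<Longrightarrow> x * y \<in> quad_ints d"
proof -
  assume x: "x \<in> quad_ints d" and y: "y \<in> quad_ints d"
  obtain A B where xe: "x = qe d A B" and hx: "4 dvd A^2 - d*B^2" using qi_struct[OF sf d1 x] by blast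
  obtain A' B' where ye: "y = qe d A' B'" and hy: "4 dvd A'^2 - d*B'^2" using qi_struct[OF sf d1 y] by blast
  have p1: "(even A \<longleftrightarrow> even B) \<and> (d mod 4 \<noteq> 1 \<longrightarrow> even A \<and> even B)" using parity[OF sf hx] .
  have p2: "(even A' \<longleftrightarrow> even B') \<and> (d mod 4 \<noteq> 1 \<longrightarrow> even A' \<and> even B')" using parity[OF sf hy] .
  have e: "even (A*A' + d*B*B') \<and> even (A*B' + A'*B)"
  proof (cases "d mod 4 = 1")
    case True
    hence "odd d" by presburger
    thus ?thesis using p1 p2 by (cases "even A"; cases "even A'") auto
  next
    case False thus ?thesis using p1 p2 by simp
  qed
  then obtain C D where C: "A*A' + d*B*B' = 2*C" and D: "A*B' + A'*B = 2*D" by blast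
  have prod: "x * y = qe d C D" using qe_mult[of C A A' d B B' D] C D xe ye by simp
  obtain n where n: "A^2 - d*B^2 = 4*n" using hx by blast
  obtain n' where n': "A'^2 - d*B'^2 = 4*n'" using hy by blast
  have "(2*C)^2 - d*(2*D)^2 = (A^2 - d*B^2)*(A'^2 - d*B'^2)"
    unfolding C[symmetric] D[symmetric] by (simp add: algebra_simps power2_eq_square)
  also have "\<dots> = 4*(4*n*n')" unfolding n n' by simp
  finally have "4*(C^2 - d*D^2) = 4*(4*(n*n'))" by (simp add: algebra_simps power2_eq_square)
  hence "C^2 - d*D^2 = 4*(n*n')" by simp
  hence "4 dvd C^2 - d*D^2" by simp
  thus ?thesis using prod qe_intro by simp
qed

lemma O_int: "of_int n \<in> quad_ints d"
proof -
  have "qe d (2*n) 0 \<in> quad_ints d" by (rule qe_intro) (simp add: power2_eq_square)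
  thus ?thesis unfolding qe_def by simp
qed

lemma O_s: "csqrt (of_int d) \<in> quad_ints d"
proof -
  have "qe d 0 2 \<in> quad_ints d" by (rule qe_intro) simp
  thus ?thesis unfolding qe_def by simp
qed

lemma O_neg: "x \<in> quad_ints d \<Longrightarrow> -x \<in> quad_ints d"
proof -
  assume "x \<in> quad_ints d"
  hence "of_int (-1) * x \<in> quad_ints d" using O_mult O_int by blast
  thus ?thesis by simp
qed

lemma O_diff: "x \<in> quad_ints d \<Longrightarrow> y \<in> quad_ints d \<Longrightarrow> x - y \<in> quad_ints d"
proof -
  assume "x \<in> quad_ints d" "y \<in> quad_ints d"
  hence "x + (-y) \<in> quad_ints d" using O_add O_neg by blast
  thus ?thesis by simp
qed

lemma O_field: "x \<in> quad_ints d \<Longrightarrow> x \<in> quad_field d"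
  unfolding quad_ints_def by simp

end

lemma K_rat: "of_rat q \<in> quad_field d"
  unfolding quad_field_def by (rule CollectI, rule exI[of _ q], rule exI[of _ 0]) simp

lemma K_mult: "x \<in> quad_field d \<Longrightarrow> y \<in> quad_field d \<Longrightarrow> x * y \<in> quad_field d"
proof -
  assume "x \<in> quad_field d" "y \<in> quad_field d"
  then obtain a b a' b' where x: "x = of_rat a + of_rat b * csqrt (of_int d)"
    and y: "y = of_rat a' + of_rat b' * csqrt (of_int d)" unfolding quad_field_def by auto
  have "x * y = of_rat (a*a' + of_int d*b*b') + of_rat (a*b' + a'*b) * csqrt (of_int d)"
    unfolding x y by (simp add: of_rat_add of_rat_mult algebra_simps csqrt_sq)
  thus ?thesis unfolding quad_field_def by blast
qed



definition S :: "int \<Rightarrow> rat \<Rightarrow> bool" where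
  "S d r \<longleftrightarrow> (\<exists>e. quad_unit d e \<and> (\<exists>y\<in>quad_field d. e * of_rat r = y^2))"

lemma prime_disc_cases:
  fixes p d :: int
  assumes "prime p" "p dvd quad_disc d"
  shows "p dvd d \<or> (p = 2 \<and> d mod 4 = 3)"
proof (cases "d mod 4 = 1")
  case True thus ?thesis using assms unfolding quad_disc_def by simp
next
  case False
  hence "p dvd 4*d" using assms unfolding quad_disc_def by simp
  hence "p dvd 4 \<or> p dvd d" using prime_dvd_mult_iff[OF assms(1)] by blast
  moreover have "p dvd 4 \<Longrightarrow> p = 2"
  proof -
    assume "p dvd 4"
    hence "p dvd 2^2" by simp
    hence "p dvd 2" using prime_dvd_power_iff[OF assms(1), of 2 2] by simp
    hence "p \<le> 2" by (simp add: zdvd_imp_le)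
    moreover have "p \<ge> 2" using assms(1) prime_ge_2_int by blast
    ultimately show "p = 2" by simp
  qed
  ultimately show ?thesis
  proof (elim disjE)
    assume "p dvd 4" "p dvd 4 \<Longrightarrow> p = 2"
    hence p2: "p = 2" by blast
    show ?thesis
    proof (cases "p dvd d")
      case False
      hence "\<not> 2 dvd d" using p2 by simp
      hence "d mod 4 = 3" using \<open>d mod 4 \<noteq> 1\<close> by presburger
      thus ?thesis using p2 by simp
    qed simp
  qed simp
qed

context
  fixes d :: int
  assumes sf: "squarefree d" and d1: "d \<noteq> 1"
begin

lemma O_0: "0 \<in> quad_ints d" using O_int[OF sf d1, of 0] by simp
lemma O_1: "1 \<in> quad_ints d" using O_int[OF sf d1, of 1] by simp

lemma unit_mult: "quad_unit d e1 \<Longrightarrow> quad_unit d e2 \<Longrightarrow> quad_unit d (e1*e2)"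
proof -
  assume "quad_unit d e1" "quad_unit d e2"
  then obtain u1 u2 where "e1 \<in> quad_ints d" "e2 \<in> quad_ints d" "u1 \<in> quad_ints d" "u2 \<in> quad_ints d"
    "e1 * u1 = 1" "e2 * u2 = 1" unfolding quad_unit_def by blast
  moreover have "(e1*e2)*(u1*u2) = (e1*u1)*(e2*u2)" by (simp add: ac_simps)
  ultimately show ?thesis unfolding quad_unit_def using O_mult[OF sf d1] by auto
qed

lemma S_mult: "S d r1 \<Longrightarrow> S d r2 \<Longrightarrow> S d (r1*r2)"
proof -
  assume "S d r1" "S d r2"
  then obtain e1 e2 y1 y2 where u: "quad_unit d e1" "quad_unit d e2" and y: "y1 \<in> quad_field d" "y2 \<in> quad_field d"
    and h: "e1 * of_rat r1 = y1^2" "e2 * of_rat r2 = y2^2" unfolding S_def by blast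
  have "(e1*e2) * of_rat (r1*r2) = (e1 * of_rat r1) * (e2 * of_rat r2)" by (simp add: of_rat_mult ac_simps)
  also have "\<dots> = (y1*y2)^2" using h by (simp add: power_mult_distrib)
  finally show ?thesis unfolding S_def using unit_mult[OF u] K_mult[OF y] by blast
qed

lemma S_sq: "S d (q^2)"
proof -
  have "quad_unit d 1" unfolding quad_unit_def using O_1 by auto
  moreover have "1 * of_rat (q^2) = (of_rat q :: complex)^2" by (simp add: of_rat_power)
  ultimately show ?thesis unfolding S_def using K_rat by blast
qed

lemma S_neg1: "S d (-1)"
proof -
  have "quad_unit d (-1)" unfolding quad_unit_def using O_neg[OF sf d1 O_1] by (intro conjI bexI[of _ "-1"]) auto
  moreover have "(-1) * of_rat (-1) = (of_rat 1 :: complex)^2" by simp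
  ultimately show ?thesis unfolding S_def using K_rat by blast
qed

lemma S_prime_gen:
  fixes p :: int and g h a1 a2 a3 :: complex
  assumes cn: "class_number_one d" and p0: "p \<noteq> 0"
    and g: "g \<in> quad_ints d" and h: "h \<in> quad_ints d" and gh: "g^2 = of_int p * h"
    and a: "a1 \<in> quad_ints d" "a2 \<in> quad_ints d" "a3 \<in> quad_ints d"
    and pa: "of_int p = a1 * (of_int p)^2 + a2 * g^2 + a3 * of_int p * g"
  shows "S d (of_int p)"
proof -
  note Oa = O_add[OF sf d1] and Om = O_mult[OF sf d1] and Oi = O_int[OF sf d1]
  define I where "I = {of_int p * \<alpha> + g * \<beta> | \<alpha> \<beta>. \<alpha> \<in> quad_ints d \<and> \<beta> \<in> quad_ints d}"
  have "quad_ideal d I"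
    unfolding quad_ideal_def
  proof (intro conjI ballI)
    show "I \<subseteq> quad_ints d" unfolding I_def using Oa Om Oi g by blast
    show "0 \<in> I" unfolding I_def using O_0 by force
  next
    fix x y assume "x \<in> I" "y \<in> I"
    then obtain \<alpha> \<beta> \<alpha>' \<beta>' where "x = of_int p * \<alpha> + g * \<beta>" "y = of_int p * \<alpha>' + g * \<beta>'"
      "\<alpha> \<in> quad_ints d" "\<beta> \<in> quad_ints d" "\<alpha>' \<in> quad_ints d" "\<beta>' \<in> quad_ints d"
      unfolding I_def by blast
    moreover have "of_int p * \<alpha> + g * \<beta> + (of_int p * \<alpha>' + g * \<beta>') = of_int p * (\<alpha>+\<alpha>') + g * (\<beta> + \<beta>')"
      by (simp add: algebra_simps)
    ultimately show "x + y \<in> I" unfolding I_def using Oa by blast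
  next
    fix x a assume "x \<in> I" "a \<in> quad_ints d"
    then obtain \<alpha> \<beta> where "x = of_int p * \<alpha> + g * \<beta>" "\<alpha> \<in> quad_ints d" "\<beta> \<in> quad_ints d"
      unfolding I_def by blast
    moreover have "a * (of_int p * \<alpha> + g * \<beta>) = of_int p * (a*\<alpha>) + g * (a*\<beta>)"
      by (simp add: algebra_simps)
    ultimately show "a * x \<in> I" unfolding I_def using Om \<open>a \<in> quad_ints d\<close> by blast
  qed
  with cn obtain \<pi> where pi: "\<pi> \<in> quad_ints d" and Ie: "I = {\<pi> * x | x. x \<in> quad_ints d}"
    unfolding class_number_one_def by blast
  have "of_int p \<in> I" unfolding I_def using O_0 O_1 by force
  then obtain \<gamma> where ga: "\<gamma> \<in> quad_ints d" "of_int p = \<pi> * \<gamma>" unfolding Ie by blast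
  have "g \<in> I" unfolding I_def using O_0 O_1 by force
  then obtain \<delta> where de: "\<delta> \<in> quad_ints d" "g = \<pi> * \<delta>" unfolding Ie by blast
  have "\<pi> \<in> I" unfolding Ie using O_1 by force
  then obtain \<alpha> \<beta> where ab: "\<pi> = of_int p * \<alpha> + g * \<beta>" "\<alpha> \<in> quad_ints d" "\<beta> \<in> quad_ints d"
    unfolding I_def by blast
  define u where "u = of_int p * \<alpha>^2 + 2 * g * \<alpha> * \<beta> + h * \<beta>^2"
  define w where "w = a1 * \<gamma>^2 + a2 * \<delta>^2 + a3 * \<gamma> * \<delta>"
  have two: "2 \<in> quad_ints d" using Oi[of 2] by simp
  have uO: "u \<in> quad_ints d" unfolding u_def power2_eq_square
    by (intro Oa Om Oi ab two g h)
  have wO: "w \<in> quad_ints d" unfolding w_def power2_eq_square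
    by (intro Oa Om a ga de)
  have pu: "\<pi>^2 = of_int p * u"
  proof -
    have "\<pi>^2 = (of_int p)^2 * \<alpha>^2 + 2 * of_int p * g * \<alpha> * \<beta> + g^2 * \<beta>^2"
      unfolding ab(1) by (simp add: algebra_simps power2_eq_square)
    also have "\<dots> = of_int p * u" unfolding gh u_def by (simp add: algebra_simps power2_eq_square)
    finally show ?thesis .
  qed
  have pw: "of_int p = \<pi>^2 * w"
  proof -
    have "(of_int p :: complex) = a1 * (\<pi>*\<gamma>)^2 + a2 * (\<pi>*\<delta>)^2 + a3 * (\<pi>*\<gamma>) * (\<pi>*\<delta>)"
      using pa unfolding ga(2)[symmetric] de(2)[symmetric] .
    also have "\<dots> = \<pi>^2 * w" unfolding w_def by (simp add: algebra_simps power2_eq_square)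
    finally show ?thesis .
  qed
  have "of_int p * 1 = of_int p * (u * w)" using pw pu by (simp add: ac_simps)
  hence uw: "u * w = 1" using p0 by simp
  have "quad_unit d u" unfolding quad_unit_def using uO wO uw by blast
  moreover have "u * of_rat (of_int p) = \<pi>^2" using pu by (simp add: ac_simps)
  ultimately show ?thesis unfolding S_def using O_field[OF sf d1 pi] by blast
qed

lemma S_prime:
  assumes cn: "class_number_one d" and p: "prime p" and pD: "p dvd quad_disc d"
  shows "S d (of_int p)"
proof -
  let ?s = "csqrt (of_int d) :: complex"
  note Oa = O_add[OF sf d1] and Om = O_mult[OF sf d1] and Oi = O_int[OF sf d1] and Os = O_s[OF sf d1]
  have p0: "p \<noteq> 0" using p by auto
  from prime_disc_cases[OF p pD] show ?thesis
  proof
    assume "p dvd d"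
    then obtain k where k: "d = p * k" by blast
    have "\<not> p dvd k"
    proof
      assume "p dvd k"
      hence "p^2 dvd d" using k by (simp add: power2_eq_square)
      hence "p dvd 1" using sf squarefreeD by blast
      thus False using p not_prime_unit by blast
    qed
    hence "gcd p k = 1" using prime_imp_coprime[OF p] by simp
    then obtain s0 t0 where st: "s0 * p + t0 * k = 1" using bezout_int[of p k] by auto
    have "p = p * (s0 * p + t0 * k)" using st by simp
    also have "\<dots> = s0 * p^2 + t0 * d" using k by (simp add: algebra_simps power2_eq_square)
    finally have "p = s0 * p^2 + t0 * d" .
    from arg_cong[OF this, of "of_int :: int \<Rightarrow> complex"]
    have "(of_int p :: complex) = of_int s0 * (of_int p)^2 + of_int t0 * of_int d" by simp
    hence pa: "(of_int p :: complex) = of_int s0 * (of_int p)^2 + of_int t0 * ?s^2 + 0 * of_int p * ?s"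
      by (simp add: power2_eq_square csqrt_sq)
    have gh: "?s^2 = of_int p * of_int k" by (simp add: power2_eq_square csqrt_sq k)
    show ?thesis by (rule S_prime_gen[OF cn p0 Os Oi gh Oi Oi O_0 pa])
  next
    assume "p = 2 \<and> d mod 4 = 3"
    hence p2: "p = 2" and "d mod 4 = 3" by auto
    have "d = 4*(d div 4) + 3" using \<open>d mod 4 = 3\<close> by presburger
    then obtain k where k: "d = 4*k + 3" by blast
    let ?g = "1 + ?s" and ?h = "of_int (2*k+2) + ?s"
    have gO: "?g \<in> quad_ints d" using Oa O_1 Os by blast
    have hO: "?h \<in> quad_ints d" using Oa Oi Os by blast
    have gh: "?g^2 = of_int p * ?h"
      unfolding p2 by (simp add: power2_eq_square csqrt_sq k algebra_simps)
    have pa: "(of_int p :: complex) = of_int (-k) * (of_int p)^2 + 1 * ?g^2 + (-1) * of_int p * ?g"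
      unfolding p2 by (simp add: power2_eq_square csqrt_sq k algebra_simps)
    show ?thesis by (rule S_prime_gen[OF cn p0 gO hO gh Oi O_1 O_neg[OF sf d1 O_1] pa])
  qed
qed

lemma S_int:
  assumes cn: "class_number_one d"
  shows "n \<noteq> 0 \<Longrightarrow> (\<forall>p. prime p \<and> p dvd n \<longrightarrow> p dvd quad_disc d) \<Longrightarrow> S d (of_int n)"
proof (induction "nat \<bar>n\<bar>" arbitrary: n rule: less_induct)
  case less
  show ?case
  proof (cases "is_unit n")
    case True
    hence "n = 1 \<or> n = -1" by (auto simp: zdvd1_eq abs_if split: if_splits)
    thus ?thesis using S_sq[of 1] S_neg1 by auto
  next
    case False
    then obtain p where p: "p dvd n" "prime p" using prime_divisor_exists less.prems(1) by blast
    then obtain m where m: "n = p * m" by blast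
    have m0: "m \<noteq> 0" using m less.prems(1) by auto
    have "p \<ge> 2" using p(2) prime_ge_2_int by blast
    hence "\<bar>m\<bar> < \<bar>n\<bar>" using m m0 by (simp add: abs_mult)
    hence lt: "nat \<bar>m\<bar> < nat \<bar>n\<bar>" by simp
    have "\<forall>q. prime q \<and> q dvd m \<longrightarrow> q dvd quad_disc d"
      using less.prems(2) m by (auto intro: dvd_mult)
    hence Sm: "S d (of_int m)" using less.hyps[OF lt m0] by blast
    have Sp: "S d (of_int p)" using S_prime[OF cn p(2)] less.prems(2) p by blast
    have "S d (of_int p * of_int m)" by (rule S_mult[OF Sp Sm])
    moreover have "(of_int n :: rat) = of_int p * of_int m" using m by simp
    ultimately show ?thesis by simp
  qed
qed

end


lemma sq_diff_mod4:
  fixes a b d :: int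
  assumes "d mod 4 = 1"
  shows "\<exists>Y \<epsilon>. a^2 - d*b^2 = 4*Y + \<epsilon> \<and> (\<epsilon> = -1 \<or> \<epsilon> = 0 \<or> \<epsilon> = 1)"
proof -
  have "d = 4*(d div 4) + 1" using assms by presburger
  then obtain k3 where k3: "d = 4*k3 + 1" by blast
  show ?thesis
  proof (cases "even a"; cases "even b")
    assume "even a" "even b"
    then obtain k1 k2 where "a^2 = 4*k1" "b^2 = 4*k2" using sq_even by blast
    hence "a^2 - d*b^2 = 4*(k1 - d*k2) + 0" by (simp add: algebra_simps)
    thus ?thesis by blast
  next
    assume "even a" "odd b"
    then obtain k1 k2 where "a^2 = 4*k1" "b^2 = 4*k2+1" using sq_even sq_odd by blast
    hence "a^2 - d*b^2 = 4*(k1 - d*k2 - k3) + (-1)" using k3 by (simp add: algebra_simps)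
    thus ?thesis by blast
  next
    assume "odd a" "even b"
    then obtain k1 k2 where "a^2 = 4*k1+1" "b^2 = 4*k2" using sq_even sq_odd by blast
    hence "a^2 - d*b^2 = 4*(k1 - d*k2) + 1" by (simp add: algebra_simps)
    thus ?thesis by blast
  next
    assume "odd a" "odd b"
    then obtain k1 k2 where "a^2 = 4*k1+1" "b^2 = 4*k2+1" using sq_odd by blast
    hence "a^2 - d*b^2 = 4*(k1 - d*k2 - k3) + 0" using k3 by (simp add: algebra_simps)
    thus ?thesis by blast
  qed
qed

lemma prime_dvd_2: "prime (p::int) \<Longrightarrow> p dvd 2 \<Longrightarrow> p = 2"
proof -
  assume p: "prime p" and "p dvd 2"
  hence "p \<le> 2" by (simp add: zdvd_imp_le)
  moreover have "p \<ge> 2" using p prime_ge_2_int by blast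
  ultimately show "p = 2" by simp
qed

lemma final_odd:
  fixes p d m A B E1 :: int
  assumes p: "prime p" "p \<noteq> 2" and pd: "\<not> p dvd d" and pm: "\<not> p dvd m"
    and s: "A^2 + d*B^2 = 2*(p*m)*E1"
    and M: "A^2 - d*B^2 = 4*(p*m) \<or> A^2 - d*B^2 = -(4*(p*m))"
  shows False
proof -
  have p2: "\<not> p dvd 2" using prime_dvd_2[OF p(1)] p(2) by blast
  have pM: "p dvd A^2 - d*B^2" using M by auto
  have pS: "p dvd A^2 + d*B^2" using s by simp
  have "p dvd (A^2 + d*B^2) + (A^2 - d*B^2)" using pS pM by (rule dvd_add)
  hence "p dvd 2 * A^2" by (simp add: algebra_simps)
  hence "p dvd A^2" using p2 prime_dvd_mult_iff[OF p(1)] by blast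
  hence pA: "p dvd A" using prime_dvd_power_iff[OF p(1), of 2] by simp
  have "p dvd (A^2 + d*B^2) - (A^2 - d*B^2)" using pS pM by (rule dvd_diff)
  hence "p dvd 2 * (d * B^2)" by (simp add: algebra_simps)
  hence "p dvd d * B^2" using p2 prime_dvd_mult_iff[OF p(1)] by blast
  hence "p dvd B^2" using pd prime_dvd_mult_iff[OF p(1)] by blast
  hence pB: "p dvd B" using prime_dvd_power_iff[OF p(1), of 2] by simp
  obtain a' where a': "A = p * a'" using pA by blast
  obtain b' where b': "B = p * b'" using pB by blast
  have eqM: "A^2 - d*B^2 = p * (p * (a'^2 - d*b'^2))" unfolding a' b' by (simp add: algebra_simps power2_eq_square)
  have e1: "4*(p*m) = p*(4*m)" by simp
  define Z where "Z = p * (a'^2 - d*b'^2)"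
  have Zd: "p * Z = p * (4*m) \<or> p * Z = - (p * (4*m))"
    using M unfolding eqM e1 Z_def .
  have p0: "p \<noteq> 0" using p by auto
  have "p dvd Z"
    unfolding Z_def by simp
  have "Z = 4*m \<or> Z = -(4*m)"
  proof (rule disjE[OF Zd])
    assume "p * Z = p * (4*m)" thus ?thesis using p0 by simp
  next
    assume "p * Z = - (p * (4*m))"
    hence "p * (Z + 4*m) = 0" by (simp add: algebra_simps)
    hence "Z + 4*m = 0" using p0 by simp
    thus ?thesis by simp
  qed
  hence "p dvd 4*m" using \<open>p dvd Z\<close> by auto
  hence "p dvd 4 \<or> p dvd m" using prime_dvd_mult_iff[OF p(1)] by blast
  moreover have "\<not> p dvd 4"
  proof
    assume "p dvd 4"
    hence "p dvd 2^2" by simp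
    hence "p dvd 2" using prime_dvd_power_iff[OF p(1), of 2 2] by simp
    thus False using p2 by blast
  qed
  ultimately show False using pm by blast
qed

lemma final_two:
  fixes d m A B E1 :: int
  assumes d: "d mod 4 = 1" and m: "odd m" and h4: "4 dvd A^2 - d*B^2"
    and s: "A^2 + d*B^2 = 2*(2*m)*E1"
    and M: "A^2 - d*B^2 = 4*(2*m) \<or> A^2 - d*B^2 = -(4*(2*m))"
  shows False
proof -
  have d0: "d mod 4 \<noteq> 0" using d by simp
  have par: "even A \<longleftrightarrow> even B" using parity0[OF d0 h4] by blast
  show False
  proof (cases "even A")
    case False
    hence oA: "odd A" and oB: "odd B" using par by auto
    obtain k1 where k1: "A^2 = 4*k1+1" using sq_odd[OF oA] by blast
    obtain k2 where k2: "B^2 = 4*k2+1" using sq_odd[OF oB] by blast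
    have "4*(k1 + d*k2) + (1 + d) = 4*(m*E1)" using s k1 k2 by (simp add: algebra_simps)
    hence "4 dvd 4*(k1 + d*k2) + (1 + d)" by (metis dvd_triv_left)
    hence "4 dvd (1 + d)" using dvd4_aux by blast
    thus False using d by presburger
  next
    case True
    hence eA: "even A" and eB: "even B" using par by auto
    obtain a where a: "A = 2*a" using eA by blast
    obtain b where b: "B = 2*b" using eB by blast
    have "A^2 - d*B^2 = 4*(a^2 - d*b^2)" unfolding a b by (simp add: algebra_simps power2_eq_square)
    hence X: "a^2 - d*b^2 = 2*m \<or> a^2 - d*b^2 = -(2*m)" using M by auto
    obtain Y \<epsilon> where Y: "a^2 - d*b^2 = 4*Y + \<epsilon>" "\<epsilon> = -1 \<or> \<epsilon> = 0 \<or> \<epsilon> = 1"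
      using sq_diff_mod4[OF d] by blast
    have "4*Y + \<epsilon> = 2*m \<or> 4*Y + \<epsilon> = -(2*m)" using X Y(1) by simp
    thus False using Y(2) m by presburger
  qed
qed



lemma qe_mult4: "qe d A B * qe d A' B' =
   (of_int (A*A' + d*B*B') + of_int (A*B' + A'*B) * csqrt (of_int d)) / 4"
proof -
  let ?s = "csqrt (of_int d) :: complex"
  have "qe d A B * qe d A' B' = (of_int A * of_int A' + of_int B * of_int B' * (?s * ?s)
         + (of_int A * of_int B' + of_int A' * of_int B) * ?s) / 4"
    unfolding qe_def by (simp add: field_simps)
  also have "\<dots> = (of_int (A*A' + d*B*B') + of_int (A*B' + A'*B) * ?s) / 4"
    unfolding csqrt_sq by (simp add: algebra_simps)
  finally show ?thesis .
qed

lemma qe_times_int: "qe d A B * of_int P = (of_int (P*A) + of_int (P*B) * csqrt (of_int d)) / 2"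
  unfolding qe_def by (simp add: field_simps)

lemma alg_int_sq: "algebraic_int ((w::complex)^2) \<Longrightarrow> algebraic_int w"
  by (rule algebraic_int_root[where p = "Polynomial.monom 1 2"]) (auto simp: coeff_monom poly_monom degree_monom_eq)

lemma parity_link: "odd (int x - int y) \<longleftrightarrow> odd (x + y)"
  by presburger

lemma coords4:
  assumes sf: "squarefree d" and d1: "d \<noteq> 1"
    and h: "(of_int X + of_int Y * csqrt (of_int d)) / 4 = (of_int X' + of_int Y' * csqrt (of_int d) :: complex) / 2"
  shows "X = 2*X' \<and> Y = 2*Y'"
proof -
  let ?s = "csqrt (of_int d) :: complex"
  have "of_int X + of_int Y * ?s = ((of_int X + of_int Y * ?s)/4) * 4" by simp
  also have "\<dots> = ((of_int X' + of_int Y' * ?s)/2) * 4" unfolding h ..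
  also have "\<dots> = 2 * (of_int X' + of_int Y' * ?s)" by simp
  finally have h2: "of_int X + of_int Y * ?s = 2 * (of_int X' + of_int Y' * ?s)" .
  have "of_int (X - 2*X') + of_int (Y - 2*Y') * ?s = (of_int X + of_int Y * ?s) - 2 * (of_int X' + of_int Y' * ?s)"
    by (simp add: algebra_simps)
  also have "\<dots> = 0" unfolding h2 by simp
  finally have "of_int (X - 2*X') + of_int (Y - 2*Y') * csqrt (of_int d) = (0::complex)" .
  thus ?thesis using coord_zero_int[OF sf d1] by fastforce
qed

lemma dir_i_ii:
  assumes sf: "squarefree d" and d1: "d \<noteq> 1" and r0: "r \<noteq> 0"
    and eu: "quad_unit d e" and y: "y \<in> quad_field d" and ey: "e * of_rat r = y^2"
    and p: "prime p" and odd: "odd (padic_val_rat p r)"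
  shows "p dvd quad_disc d"
proof (rule ccontr)
  assume nD: "\<not> p dvd quad_disc d"
  let ?s = "csqrt (of_int d) :: complex"
  obtain a b where qr: "quotient_of r = (a,b)" by (cases "quotient_of r") auto
  have b0: "b > 0" using quotient_of_denom_pos[OF qr] .
  have rab: "r = of_int a / of_int b" using quotient_of_div[OF qr] .
  have a0: "a \<noteq> 0" using r0 rab by auto
  have v: "padic_val_rat p r = int (multiplicity p a) - int (multiplicity p b)"
    by (simp add: padic_val_rat_def qr)
  define n where "n = a*b"
  have n0: "n \<noteq> 0" using a0 b0 unfolding n_def by simp
  have mn: "multiplicity p n = multiplicity p a + multiplicity p b"
    unfolding n_def using prime_elem_multiplicity_mult_distrib[of p a b] p a0 b0 prime_ge_2_int[OF p] by simp
  have "odd (multiplicity p n)" using odd unfolding v mn parity_link .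
  then obtain j where j: "multiplicity p n = Suc (2*j)" by (auto elim: oddE)
  have pu: "\<not> is_unit p" using p not_prime_unit by blast
  obtain m where nm: "n = p ^ multiplicity p n * m" and pm: "\<not> p dvd m"
    using multiplicity_decompose'[of n p] n0 pu by blast
  have p0: "p \<noteq> 0" using p by auto
  have m0: "m \<noteq> 0" using nm n0 by auto
  define c :: rat where "c = of_int b / of_int p ^ j"
  have rc: "r * c^2 = of_int (p*m)"
  proof -
    have "r * c^2 * (of_int p)^(2*j) = of_int a * of_int b"
      unfolding rab c_def using b0 p0 by (simp add: field_simps power2_eq_square power_mult)
    also have "\<dots> = of_int n" unfolding n_def by simp
    also have "\<dots> = (of_int p)^(2*j) * of_int (p*m)" unfolding j by (subst nm) (simp add: j algebra_simps)
    finally show ?thesis using p0 by simp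
  qed
  define w where "w = y * of_rat c"
  have wK: "w \<in> quad_field d" unfolding w_def using K_mult[OF y K_rat] .
  define P where "P = p*m"
  have P0: "P \<noteq> 0" unfolding P_def using p0 m0 by simp
  have w2: "w^2 = e * of_int P"
  proof -
    have "w^2 = e * of_rat r * (of_rat c)^2" unfolding w_def by (simp add: power_mult_distrib ey)
    also have "\<dots> = e * of_rat (r * c^2)" by (simp add: of_rat_mult of_rat_power)
    also have "\<dots> = e * of_int P" unfolding rc P_def by (simp add: of_rat_mult)
    finally show ?thesis .
  qed
  from eu obtain u where eO: "e \<in> quad_ints d" and uO: "u \<in> quad_ints d" and eu1: "e * u = 1"
    unfolding quad_unit_def by blast
  have "w^2 \<in> quad_ints d" unfolding w2 using O_mult[OF sf d1 eO O_int[OF sf d1]] .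
  hence "algebraic_int w" unfolding quad_ints_def using alg_int_sq by blast
  hence wO: "w \<in> quad_ints d" unfolding quad_ints_def using wK by blast
  obtain A B where wAB: "w = qe d A B" and hw: "4 dvd A^2 - d*B^2" using qi_struct[OF sf d1 wO] by blast
  obtain E1 E2 where eE: "e = qe d E1 E2" and he: "4 dvd E1^2 - d*E2^2" using qi_struct[OF sf d1 eO] by blast
  obtain U1 U2 where uU: "u = qe d U1 U2" and hu: "4 dvd U1^2 - d*U2^2" using qi_struct[OF sf d1 uO] by blast
  have "(of_int (E1*U1 + d*E2*U2) + of_int (E1*U2 + U1*E2) * ?s) / 4 = (of_int 2 + of_int 0 * ?s) / 2"
    using eu1 unfolding eE uU qe_mult4 by simp
  from coords4[OF sf d1 this] have eu_c: "E1*U1 + d*E2*U2 = 4" "E1*U2 + U1*E2 = 0" by auto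
  obtain NE where NE: "E1^2 - d*E2^2 = 4*NE" using he by blast
  obtain NU where NU: "U1^2 - d*U2^2 = 4*NU" using hu by blast
  have "(E1^2 - d*E2^2) * (U1^2 - d*U2^2) = (E1*U1 + d*E2*U2)^2 - d*(E1*U2 + U1*E2)^2"
    by (simp add: algebra_simps power2_eq_square)
  also have "\<dots> = 16" unfolding eu_c by simp
  finally have "16 * (NE * NU) = 16" unfolding NE NU by (simp add: algebra_simps)
  hence "NE * NU = 1" by simp
  hence NE1: "NE = 1 \<or> NE = -1" using zmult_eq_1_iff by blast
  have "(of_int (A*A + d*B*B) + of_int (A*B + A*B) * ?s) / 4 = (of_int (P*E1) + of_int (P*E2) * ?s) / 2"
    using w2 unfolding wAB eE power2_eq_square qe_mult4 qe_times_int .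
  from coords4[OF sf d1 this] have wc: "A*A + d*B*B = 2*(P*E1)" "A*B + A*B = 2*(P*E2)" by auto
  have S: "A^2 + d*B^2 = 2*P*E1" using wc(1) by (simp add: power2_eq_square)
  have AB: "A*B = P*E2" using wc(2) by simp
  define M where "M = A^2 - d*B^2"
  have "M^2 = (A^2 + d*B^2)^2 - 4*d*(A*B)^2" unfolding M_def by (simp add: algebra_simps power2_eq_square)
  also have "\<dots> = 4*P^2*(E1^2 - d*E2^2)" unfolding S AB by (simp add: algebra_simps power2_eq_square)
  also have "\<dots> = 16*P^2*NE" unfolding NE by simp
  finally have M2: "M^2 = 16*P^2*NE" .
  have "NE = 1"
  proof (rule ccontr)
    assume "NE \<noteq> 1" hence "NE = -1" using NE1 by simp
    hence "M^2 = - (16*P^2)" using M2 by simp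
    moreover have "P^2 > 0" using P0 by simp
    moreover have "M^2 \<ge> 0" by simp
    ultimately show False by simp
  qed
  hence "M^2 = (4*P)^2" using M2 by (simp add: power2_eq_square)
  hence Mpm: "M = 4*P \<or> M = -(4*P)" using power2_eq_iff by blast
  have dD: "d dvd quad_disc d" unfolding quad_disc_def by simp
  show False
  proof (cases "p = 2")
    case False
    have pd: "\<not> p dvd d" using nD dD dvd_trans by blast
    show False using final_odd[OF p False pd pm, of A B E1] S Mpm unfolding M_def P_def by simp
  next
    case True
    have d4: "d mod 4 = 1"
    proof (rule ccontr)
      assume "d mod 4 \<noteq> 1"
      hence "quad_disc d = 2 * (2*d)" unfolding quad_disc_def by simp
      thus False using nD True by simp
    qed
    have om: "odd m" using pm True by simp
    show False using final_two[OF d4 om hw, of E1] S Mpm unfolding M_def P_def True by simp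
  qed
qed



lemma disc_nz: "squarefree d \<Longrightarrow> quad_disc d \<noteq> 0"
  unfolding quad_disc_def by auto

lemma dir_ii_iii:
  assumes sf: "squarefree d" and r0: "r \<noteq> 0"
    and C2: "\<forall>p::int. prime p \<and> odd (padic_val_rat p r) \<longrightarrow> p dvd quad_disc d"
  shows "\<exists>d'::int. d' dvd quad_disc d \<and> (\<exists>q::rat. of_int d' * r = q ^ 2)"
proof -
  obtain a b where qr: "quotient_of r = (a,b)" by (cases "quotient_of r") auto
  have b0: "b > 0" using quotient_of_denom_pos[OF qr] .
  have rab: "r = of_int a / of_int b" using quotient_of_div[OF qr] .
  have a0: "a \<noteq> 0" using r0 rab by auto
  define n where "n = a*b"
  have n0: "n \<noteq> 0" using a0 b0 unfolding n_def by simp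
  define d' where "d' = squarefree_part n"
  define t where "t = square_part n"
  have nd: "n = d' * t^2" unfolding d'_def t_def by (rule squarefree_decompose)
  have d'0: "d' \<noteq> 0" unfolding d'_def by simp
  have D0: "quad_disc d \<noteq> 0" using disc_nz[OF sf] .
  have "d' dvd quad_disc d"
  proof (rule multiplicity_le_imp_dvd[OF d'0])
    fix p :: int assume p: "prime p"
    have md: "multiplicity p d' = multiplicity p n mod 2"
      unfolding d'_def by (rule prime_multiplicity_squarefree_part[OF p])
    show "multiplicity p d' \<le> multiplicity p (quad_disc d)"
    proof (cases "even (multiplicity p n)")
      case True thus ?thesis using md by simp
    next
      case False
      have mn: "multiplicity p n = multiplicity p a + multiplicity p b"
        unfolding n_def using prime_elem_multiplicity_mult_distrib[of p a b] p a0 b0 prime_ge_2_int[OF p] by simp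
      have v: "padic_val_rat p r = int (multiplicity p a) - int (multiplicity p b)"
        by (simp add: padic_val_rat_def qr)
      have "odd (padic_val_rat p r)" unfolding v parity_link mn[symmetric] using False .
      hence "p dvd quad_disc d" using C2 p by blast
      hence "multiplicity p (quad_disc d) > 0" using prime_multiplicity_gt_zero_iff[of p "quad_disc d"] p D0 prime_ge_2_int[OF p] by simp
      moreover have "multiplicity p d' \<le> 1" using md by simp
      ultimately show ?thesis by simp
    qed
  qed
  moreover have "of_int d' * r = (of_int (d'*t) / of_int b)^2"
  proof -
    have "of_int d' * r = of_int (d' * n) / (of_int b)^2"
      unfolding rab n_def using b0 by (simp add: field_simps power2_eq_square)
    also have "d' * n = (d'*t)^2" unfolding nd by (simp add: power2_eq_square)
    finally show ?thesis by (simp add: power_divide)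
  qed
  ultimately show ?thesis by blast
qed

lemma dir_iii_ii:
  assumes sf: "squarefree d" and r0: "r \<noteq> 0"
    and dd: "d' dvd quad_disc d" and dq: "of_int d' * r = q^2"
    and p: "prime p" and odd: "odd (padic_val_rat p r)"
  shows "p dvd quad_disc d"
proof -
  have D0: "quad_disc d \<noteq> 0" using disc_nz[OF sf] .
  have d'0: "d' \<noteq> 0" using dd D0 by auto
  have q0: "q \<noteq> 0" using dq d'0 r0 by auto
  obtain a b where qr: "quotient_of r = (a,b)" by (cases "quotient_of r") auto
  have b0: "b > 0" using quotient_of_denom_pos[OF qr] .
  have rab: "r = of_int a / of_int b" using quotient_of_div[OF qr] .
  have a0: "a \<noteq> 0" using r0 rab by auto
  obtain c f where qq: "quotient_of q = (c,f)" by (cases "quotient_of q") auto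
  have f0: "f > 0" using quotient_of_denom_pos[OF qq] .
  have qcf: "q = of_int c / of_int f" using quotient_of_div[OF qq] .
  have c0: "c \<noteq> 0" using q0 qcf by auto
  have "rat_of_int (d' * a * f^2) = of_int (c^2 * b)"
  proof -
    have "of_int d' * (of_int a / of_int b) = (of_int c / of_int f :: rat)^2" using dq unfolding rab qcf .
    thus ?thesis using b0 f0 by (simp add: field_simps power2_eq_square)
  qed
  hence eq: "d' * a * f^2 = c^2 * b" using of_int_eq_iff by blast
  have pe: "prime_elem p" using p unfolding prime_def by blast
  have "multiplicity p (d' * a * f^2) = multiplicity p (c^2 * b)" using eq by simp
  hence "multiplicity p d' + multiplicity p a + 2 * multiplicity p f = 2 * multiplicity p c + multiplicity p b"
    using pe d'0 a0 f0 c0 b0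
    by (simp add: prime_elem_multiplicity_mult_distrib prime_elem_multiplicity_power_distrib)
  moreover have v: "padic_val_rat p r = int (multiplicity p a) - int (multiplicity p b)"
    by (simp add: padic_val_rat_def qr)
  ultimately have "odd (multiplicity p d')" using odd by presburger
  hence "multiplicity p d' > 0" by (cases "multiplicity p d'") auto
  hence "p dvd d'" using prime_multiplicity_gt_zero_iff[OF pe d'0] by simp
  thus ?thesis using dd by (rule dvd_trans)
qed

lemma dir_iii_i:
  assumes sf: "squarefree d" and d1: "d \<noteq> 1" and cn: "class_number_one d" and r0: "r \<noteq> 0"
    and dd: "d' dvd quad_disc d" and dq: "of_int d' * r = q^2"
  shows "S d r"
proof -
  have D0: "quad_disc d \<noteq> 0" using disc_nz[OF sf] .
  have d'0: "d' \<noteq> 0" using dd D0 by auto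
  have "\<forall>p. prime p \<and> p dvd d' \<longrightarrow> p dvd quad_disc d" using dd dvd_trans by blast
  hence S1: "S d (of_int d')" using S_int[OF sf d1 cn d'0] by blast
  have S2: "S d ((q / of_int d')^2)" using S_sq[OF sf d1] .
  have "r = of_int d' * (q / of_int d')^2"
    using dq d'0 by (simp add: field_simps power2_eq_square)
  thus ?thesis using S_mult[OF sf d1 S1 S2] by simp
qed

theorem lemma4p1:
  fixes d :: int and r :: rat
  assumes "squarefree d" and "d \<noteq> 1"
    and "class_number_one d"
    and "r \<noteq> 0"
  shows "((\<exists>e. quad_unit d e \<and> (\<exists>y\<in>quad_field d. e * of_rat r = y ^ 2))
          \<longleftrightarrow> (\<forall>p::int. prime p \<and> odd (padic_val_rat p r) \<longrightarrow> p dvd quad_disc d))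
       \<and> ((\<forall>p::int. prime p \<and> odd (padic_val_rat p r) \<longrightarrow> p dvd quad_disc d)
          \<longleftrightarrow> (\<exists>d'::int. d' dvd quad_disc d \<and> (\<exists>q::rat. of_int d' * r = q ^ 2)))"
proof -
  note sf = assms(1) and d1 = assms(2) and cn = assms(3) and r0 = assms(4)
  have i_ii: "(\<exists>e. quad_unit d e \<and> (\<exists>y\<in>quad_field d. e * of_rat r = y ^ 2))
      \<Longrightarrow> (\<forall>p::int. prime p \<and> odd (padic_val_rat p r) \<longrightarrow> p dvd quad_disc d)"
    using dir_i_ii[OF sf d1 r0] by blast
  have ii_iii: "(\<forall>p::int. prime p \<and> odd (padic_val_rat p r) \<longrightarrow> p dvd quad_disc d)
      \<Longrightarrow> (\<exists>d'::int. d' dvd quad_disc d \<and> (\<exists>q::rat. of_int d' * r = q ^ 2))"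
    using dir_ii_iii[OF sf r0] by blast
  have iii_ii: "(\<exists>d'::int. d' dvd quad_disc d \<and> (\<exists>q::rat. of_int d' * r = q ^ 2))
      \<Longrightarrow> (\<forall>p::int. prime p \<and> odd (padic_val_rat p r) \<longrightarrow> p dvd quad_disc d)"
    using dir_iii_ii[OF sf r0] by blast
  have iii_i: "(\<exists>d'::int. d' dvd quad_disc d \<and> (\<exists>q::rat. of_int d' * r = q ^ 2))
      \<Longrightarrow> (\<exists>e. quad_unit d e \<and> (\<exists>y\<in>quad_field d. e * of_rat r = y ^ 2))"
    using dir_iii_i[OF sf d1 cn r0] unfolding S_def by blast
  show ?thesis using i_ii ii_iii iii_ii iii_i by blast
qed


end
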